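(* There is an infinite family of directed graphs (with unit arc lengths) such that, with $n$ the number of vertices, the distance greedy algorithm d-HHL finds a hierarchical hub labeling of size $\Omega(n^{3/2})$ while the optimal hierarchical hub labeling has size $O(n)$.
   Context: For a directed graph $G=(V,E)$, $n=|V|$, a hub labeling assigns forward and backward labels $L_f(v),L_b(v)\subseteq V$ such that for every ordered pair $(u,w)$ with $w$ reachable from $u$, $L_f(u)\cap L_b(w)$ contains a vertex on a shortest $u$–$w$ path; its size is $\sum_v(|L_f(v)|+|L_b(v)|)$. It is hierarchical (HHL) if there is a bijection $\pi:V\to\{1,\dots,n\}$ with $u\in L_f(v)\cup L_b(v)\Rightarrow\pi(u)\le\pi(v)$. d-HHL: start with empty labels; $U$ is the set of uncovered pairs. Each pair gets weight $W(u,w)=0$ if $\mathrm{dist}(u,w)=0$ and $n^{2\lfloor\log_2\mathrm{dist}(u,w)\rfloor}$ otherwise. For each not-yet-selected vertex $v$, the center graph is the bipartite graph with two copies $X,Y$ of $V$ and an arc $(u,w)$ of weight $W(u,w)$ for each $(u,w)\in U$ having a shortest $u$–$w$ path through $v$. Each iteration selects a not-yet-selected $v$ whose center graph has the largest total arc weight and adds $v$ to $L_f(u)$ for all non-isolated $u\in X$ and to $L_b(w)$ for all non-isolated $w\in Y$, until all pairs are covered. *)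

theory Defs
  imports Complex_Main
begin

text \<open>A graph is a finite vertex set V with an arc relation E \<subseteq> V \<times> V.
  Every arc has length 1, so the distance is the least number of arcs.\<close>

definition reach :: "('a \<times> 'a) set \<Rightarrow> 'a \<Rightarrow> 'a \<Rightarrow> bool" where
  "reach E u w \<longleftrightarrow> (u, w) \<in> E\<^sup>*"

definition gdist :: "('a \<times> 'a) set \<Rightarrow> 'a \<Rightarrow> 'a \<Rightarrow> nat" where
  "gdist E u w = (LEAST k. (u, w) \<in> E ^^ k)"

definition on_sp :: "('a \<times> 'a) set \<Rightarrow> 'a \<Rightarrow> 'a \<Rightarrow> 'a \<Rightarrow> bool" where
  "on_sp E u v w \<longleftrightarrow> reach E u v \<and> reach E v w \<and> gdist E u v + gdist E v w = gdist E u w"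

definition covers :: "('a \<times> 'a) set \<Rightarrow> ('a \<Rightarrow> 'a set) \<Rightarrow> ('a \<Rightarrow> 'a set) \<Rightarrow> 'a \<Rightarrow> 'a \<Rightarrow> bool" where
  "covers E Lf Lb u w \<longleftrightarrow> (\<exists>v \<in> Lf u \<inter> Lb w. on_sp E u v w)"

definition is_hub_labeling :: "'a set \<Rightarrow> ('a \<times> 'a) set \<Rightarrow> ('a \<Rightarrow> 'a set) \<Rightarrow> ('a \<Rightarrow> 'a set) \<Rightarrow> bool" where
  "is_hub_labeling V E Lf Lb \<longleftrightarrow>
     (\<forall>v \<in> V. Lf v \<subseteq> V \<and> Lb v \<subseteq> V) \<and>
     (\<forall>u \<in> V. \<forall>w \<in> V. reach E u w \<longrightarrow> covers E Lf Lb u w)"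

definition hl_size :: "'a set \<Rightarrow> ('a \<Rightarrow> 'a set) \<Rightarrow> ('a \<Rightarrow> 'a set) \<Rightarrow> nat" where
  "hl_size V Lf Lb = (\<Sum>v\<in>V. card (Lf v) + card (Lb v))"

definition is_hierarchical :: "'a set \<Rightarrow> ('a \<Rightarrow> 'a set) \<Rightarrow> ('a \<Rightarrow> 'a set) \<Rightarrow> bool" where
  "is_hierarchical V Lf Lb \<longleftrightarrow>
     (\<exists>\<pi>. bij_betw \<pi> V {1..card V} \<and> (\<forall>v \<in> V. \<forall>u \<in> Lf v \<union> Lb v. \<pi> u \<le> \<pi> v))"

definition is_HHL :: "'a set \<Rightarrow> ('a \<times> 'a) set \<Rightarrow> ('a \<Rightarrow> 'a set) \<Rightarrow> ('a \<Rightarrow> 'a set) \<Rightarrow> bool" where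
  "is_HHL V E Lf Lb \<longleftrightarrow> is_hub_labeling V E Lf Lb \<and> is_hierarchical V Lf Lb"

definition uncovered :: "'a set \<Rightarrow> ('a \<times> 'a) set \<Rightarrow> ('a \<Rightarrow> 'a set) \<Rightarrow> ('a \<Rightarrow> 'a set) \<Rightarrow> ('a \<times> 'a) set" where
  "uncovered V E Lf Lb = {(u, w). u \<in> V \<and> w \<in> V \<and> reach E u w \<and> \<not> covers E Lf Lb u w}"

definition pweight :: "'a set \<Rightarrow> ('a \<times> 'a) set \<Rightarrow> 'a \<Rightarrow> 'a \<Rightarrow> nat" where
  "pweight V E u w = (if gdist E u w = 0 then 0
                      else card V ^ (2 * nat \<lfloor>log 2 (real (gdist E u w))\<rfloor>))"

definition center_arcs :: "'a set \<Rightarrow> ('a \<times> 'a) set \<Rightarrow> ('a \<Rightarrow> 'a set) \<Rightarrow> ('a \<Rightarrow> 'a set) \<Rightarrow> 'a \<Rightarrow> ('a \<times> 'a) set" where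
  "center_arcs V E Lf Lb v = {(u, w) \<in> uncovered V E Lf Lb. on_sp E u v w}"

definition center_weight :: "'a set \<Rightarrow> ('a \<times> 'a) set \<Rightarrow> ('a \<Rightarrow> 'a set) \<Rightarrow> ('a \<Rightarrow> 'a set) \<Rightarrow> 'a \<Rightarrow> nat" where
  "center_weight V E Lf Lb v = (\<Sum>(u, w) \<in> center_arcs V E Lf Lb v. pweight V E u w)"

definition dstep :: "'a set \<Rightarrow> ('a \<times> 'a) set \<Rightarrow> 'a \<Rightarrow> ('a \<Rightarrow> 'a set) \<times> ('a \<Rightarrow> 'a set)
                      \<Rightarrow> ('a \<Rightarrow> 'a set) \<times> ('a \<Rightarrow> 'a set)" where
  "dstep V E v L = (let A = center_arcs V E (fst L) (snd L) v in
      (\<lambda>x. fst L x \<union> (if (\<exists>w. (x, w) \<in> A) then {v} else {}),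
       \<lambda>x. snd L x \<union> (if (\<exists>u. (u, x) \<in> A) then {v} else {})))"

definition labels_after :: "'a set \<Rightarrow> ('a \<times> 'a) set \<Rightarrow> 'a list \<Rightarrow> ('a \<Rightarrow> 'a set) \<times> ('a \<Rightarrow> 'a set)" where
  "labels_after V E vs = fold (dstep V E) vs (\<lambda>_. {}, \<lambda>_. {})"

text \<open>vs is a complete execution of d-HHL (any tie-breaking): the i-th selected vertex is
  not yet selected and maximizes the center-graph weight among non-selected vertices,
  each iteration starts with uncovered pairs, and at the end all pairs are covered.\<close>
definition dHHL_run :: "'a set \<Rightarrow> ('a \<times> 'a) set \<Rightarrow> 'a list \<Rightarrow> bool" where
  "dHHL_run V E vs \<longleftrightarrow> distinct vs \<and> set vs \<subseteq> V \<and>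
     (\<forall>i < length vs.
        let L = labels_after V E (take i vs) in
        uncovered V E (fst L) (snd L) \<noteq> {} \<and>
        (\<forall>x \<in> V - set (take i vs).
            center_weight V E (fst L) (snd L) x \<le> center_weight V E (fst L) (snd L) (vs ! i))) \<and>
     (let L = labels_after V E vs in uncovered V E (fst L) (snd L) = {})"

end

theory Submission
  imports Defs
begin

definition PV :: "nat \<Rightarrow> nat set" where "PV K = {1..5*K}"
definition UV :: "nat \<Rightarrow> nat set" where "UV K = {5*K+1..5*K+K*K}"
definition VV :: "nat \<Rightarrow> nat set" where "VV K = {0..5*K+K*K}"
definition EE :: "nat \<Rightarrow> (nat \<times> nat) set" where
  "EE K = {(u,0)|u. u \<in> UV K} \<union> {(0,y)|y. y \<in> PV K} \<union> {(y, y-1)|y. y \<in> PV K \<and> (y-1) mod 5 \<noteq> 0}"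
definition pth :: "nat \<Rightarrow> nat" where "pth y = (y-1) div 5"
definition lvl :: "nat \<Rightarrow> nat \<Rightarrow> nat" where
  "lvl K x = (if x = 0 then 3 else if x \<in> PV K then 4 - (x-1) mod 5 else 2)"


lemma aux: "(t::nat) mod 5 \<noteq> 0 \<Longrightarrow> (t-1) div 5 = t div 5 \<and> (t-1) mod 5 = t mod 5 - 1"
proof -
  assume a: "t mod 5 \<noteq> 0"
  define q r where "q = t div 5" and "r = t mod 5"
  have t: "t = 5*q + r" and r: "r < 5" "r \<noteq> 0" using a by (auto simp: q_def r_def)
  have e: "t - 1 = 5*q + (r-1)" using t r by simp
  have 1: "(5*q + (r-1)) div 5 = q" using r by simp
  have m: "(r-1) mod 5 = r-1" using r by simp
  have 2: "(5*q + (r-1)) mod 5 = r - 1" by (metis mod_mult_self4 m)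
  show ?thesis using e 1 2 unfolding q_def r_def by simp
qed

lemma gdist_refl: "gdist E x x = 0"
  unfolding gdist_def by (rule Least_eq_0) simp

lemma gdist_le: "(x,y) \<in> E ^^ k \<Longrightarrow> gdist E x y \<le> k"
  unfolding gdist_def by (rule Least_le)

lemma gdist_in: "reach E x y \<Longrightarrow> (x,y) \<in> E ^^ gdist E x y"
  unfolding gdist_def reach_def by (rule LeastI_ex) (meson rtrancl_power)

lemma gdist_ge: assumes "reach E x y" "\<And>k. (x,y) \<in> E ^^ k \<Longrightarrow> m \<le> k" shows "m \<le> gdist E x y"
  using gdist_in[OF assms(1)] by (rule assms(2))

lemma gdist0: "reach E x y \<Longrightarrow> gdist E x y = 0 \<Longrightarrow> x = y"
  using gdist_in by fastforce

lemma on_sp_left: "reach E u w \<Longrightarrow> on_sp E u u w"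
  by (simp add: on_sp_def reach_def gdist_refl)
lemma on_sp_right: "reach E u w \<Longrightarrow> on_sp E u w w"
  by (simp add: on_sp_def reach_def gdist_refl)

lemma on_sp_reach: "on_sp E u v w \<Longrightarrow> reach E u v" by (simp add: on_sp_def)


lemma la_snoc: "labels_after V E (xs @ [v]) = dstep V E v (labels_after V E xs)"
  by (simp add: labels_after_def)

lemma la_sub: "fst (labels_after V E xs) x \<subseteq> set xs \<and> snd (labels_after V E xs) x \<subseteq> set xs"
proof (induction xs arbitrary: x rule: rev_induct)
  case Nil thus ?case by (simp add: labels_after_def)
next
  case (snoc v xs) thus ?case by (auto simp: la_snoc dstep_def Let_def)
qed

lemma la_mono: "fst (labels_after V E xs) x \<subseteq> fst (labels_after V E (xs @ ys)) x"
proof (induction ys rule: rev_induct)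
  case Nil thus ?case by simp
next
  case (snoc y ys)
  have "fst (labels_after V E (xs @ ys)) x \<subseteq> fst (labels_after V E (xs @ ys @ [y])) x"
    unfolding append_assoc[symmetric] la_snoc by (auto simp: dstep_def Let_def)
  thus ?case using snoc by auto
qed

lemma dstep_add: "(x,w) \<in> center_arcs V E (fst L) (snd L) v \<Longrightarrow> v \<in> fst (dstep V E v L) x"
  by (auto simp: dstep_def Let_def)

context fixes K :: nat assumes K1: "K \<ge> 1" begin

lemma arc: "(a,b) \<in> EE K \<longleftrightarrow> (a \<in> UV K \<and> b = 0) \<or> (a = 0 \<and> b \<in> PV K) \<or> (a \<in> PV K \<and> (a-1) mod 5 \<noteq> 0 \<and> b = a-1)"
  by (auto simp: EE_def)

lemma U_notP: "u \<in> UV K \<Longrightarrow> u \<notin> PV K \<and> u \<noteq> 0"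
  by (auto simp: UV_def PV_def)
lemma zero_notP: "0 \<notin> PV K" by (simp add: PV_def)

lemma arcP: assumes "(a,b) \<in> EE K" "a \<in> PV K" shows "b \<in> PV K \<and> pth b = pth a"
proof -
  have "(a-1) mod 5 \<noteq> 0 \<and> b = a-1" using assms U_notP zero_notP unfolding arc by auto
  moreover from this have "a - 1 \<noteq> 0" by auto
  ultimately have b: "b = a - 1" "a \<ge> 2" "(a-1) mod 5 \<noteq> 0" using assms(2) by (auto simp: PV_def)
  hence "b \<in> PV K" using assms(2) by (auto simp: PV_def)
  moreover have "pth b = pth a" unfolding pth_def b(1) using aux[OF b(3)] by simp
  ultimately show ?thesis by simp
qed

lemma arc_tgt: "(a,b) \<in> EE K \<Longrightarrow> b = 0 \<or> b \<in> PV K"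
  using arcP unfolding arc by blast

lemma reachP: "(a,b) \<in> (EE K)\<^sup>* \<Longrightarrow> a \<in> PV K \<Longrightarrow> b \<in> PV K \<and> pth b = pth a"
  by (induction rule: rtrancl_induct) (auto dest: arcP)

lemma reach_any: "(a,b) \<in> (EE K)\<^sup>* \<Longrightarrow> b = a \<or> b = 0 \<or> b \<in> PV K"
  by (induction rule: rtrancl_induct) (auto dest: arc_tgt)

lemma arc_lvl: "(a,b) \<in> EE K \<Longrightarrow> lvl K b \<le> lvl K a + 1"
proof -
  assume e: "(a,b) \<in> EE K"
  consider "a \<in> UV K" "b = 0" | "a = 0" "b \<in> PV K" | "a \<in> PV K" "(a-1) mod 5 \<noteq> 0" "b = a-1"
    using e unfolding arc by blast
  thus ?thesis
  proof cases
    case 1 thus ?thesis using U_notP by (auto simp: lvl_def)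
  next
    case 2 thus ?thesis using zero_notP by (auto simp: lvl_def)
  next
    case 3
    hence bP: "b \<in> PV K" using arcP e by blast
    define m where "m = (a-1) mod 5"
    have "(b-1) mod 5 = m - 1" using 3 aux[of "a-1"] by (simp add: m_def)
    hence "lvl K b = 4 - (m-1)" "lvl K a = 4 - m"
      using 3 bP zero_notP by (auto simp: lvl_def m_def)
    moreover have "m \<noteq> 0" using 3 m_def by simp
    ultimately show ?thesis by linarith
  qed
qed

lemma pow_lvl: "(a,b) \<in> EE K ^^ k \<Longrightarrow> lvl K b \<le> lvl K a + k"
proof (induction k arbitrary: b)
  case 0 thus ?case by simp
next
  case (Suc k)
  then obtain z where "(a,z) \<in> EE K ^^ k" "(z,b) \<in> EE K" by auto
  with Suc.IH arc_lvl show ?case by fastforce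
qed

lemma U_reach_P: "u \<in> UV K \<Longrightarrow> y \<in> PV K \<Longrightarrow> (u,y) \<in> EE K ^^ 2"
proof -
  assume "u \<in> UV K" "y \<in> PV K"
  hence "(u,0) \<in> EE K" "(0,y) \<in> EE K" by (auto simp: arc)
  thus ?thesis by (simp add: relcomp.relcompI numeral_2_eq_2)
qed

lemma gd_U0: "u \<in> UV K \<Longrightarrow> gdist (EE K) u 0 = 1"
proof -
  assume u: "u \<in> UV K"
  hence e: "(u,0) \<in> EE K" by (auto simp: arc)
  hence r: "reach (EE K) u 0" by (simp add: reach_def)
  have "gdist (EE K) u 0 \<le> 1" using e by (intro gdist_le) simp
  moreover have "gdist (EE K) u 0 \<noteq> 0" using gdist0[OF r] U_notP[OF u] by auto
  ultimately show ?thesis by simp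
qed

lemma gd_0P: "y \<in> PV K \<Longrightarrow> gdist (EE K) 0 y = 1"
proof -
  assume y: "y \<in> PV K"
  hence e: "(0,y) \<in> EE K" by (auto simp: arc)
  hence r: "reach (EE K) 0 y" by (simp add: reach_def)
  have "gdist (EE K) 0 y \<le> 1" using e by (intro gdist_le) simp
  moreover have "gdist (EE K) 0 y \<noteq> 0" using gdist0[OF r] zero_notP y by auto
  ultimately show ?thesis by simp
qed

lemma U_pow_ge2: "u \<in> UV K \<Longrightarrow> (u,v) \<in> EE K ^^ k \<Longrightarrow> v \<in> PV K \<Longrightarrow> 2 \<le> k"
proof (rule ccontr)
  assume u: "u \<in> UV K" and p: "(u,v) \<in> EE K ^^ k" and v: "v \<in> PV K" and "\<not> 2 \<le> k"
  hence "k = 0 \<or> k = 1" by auto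
  thus False
  proof
    assume "k = 0" thus False using p u v U_notP by auto
  next
    assume "k = 1" hence "(u,v) \<in> EE K" using p by simp
    thus False using u v U_notP zero_notP unfolding arc by auto
  qed
qed

lemma gd_UP: "u \<in> UV K \<Longrightarrow> y \<in> PV K \<Longrightarrow> gdist (EE K) u y = 2"
proof -
  assume u: "u \<in> UV K" and y: "y \<in> PV K"
  have p: "(u,y) \<in> EE K ^^ 2" by (rule U_reach_P[OF u y])
  hence r: "reach (EE K) u y" by (auto simp: reach_def dest: relpow_imp_rtrancl)
  have "gdist (EE K) u y \<le> 2" using p by (rule gdist_le)
  moreover have "2 \<le> gdist (EE K) u y" using U_pow_ge2[OF u _ y] by (intro gdist_ge[OF r])
  ultimately show ?thesis by simp
qed

lemma a0P: "j < K \<Longrightarrow> 5+5*j \<in> PV K \<and> pth (5+5*j) = j"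
  by (auto simp: PV_def pth_def)
lemma a4P: "j < K \<Longrightarrow> 1+5*j \<in> PV K \<and> pth (1+5*j) = j"
  by (auto simp: PV_def pth_def)

lemma chain4: "j < K \<Longrightarrow> (5+5*j, 1+5*j) \<in> EE K ^^ 4"
proof -
  assume j: "j < K"
  have P: "x \<in> PV K" if "1+5*j \<le> x" "x \<le> 5+5*j" for x using that j by (auto simp: PV_def)
  have mm: "(c + 5*j) mod 5 = c mod 5" for c :: nat by (rule mod_mult_self2)
  have e: "(x+5*j, (x-1)+5*j) \<in> EE K" if "2 \<le> x" "x \<le> 5" for x
  proof -
    have q: "x + 5*j - 1 = (x-1) + 5*j" using that by simp
    have B: "(x + 5*j - 1) mod 5 \<noteq> 0" unfolding q using mm[of "x-1"] that by simp
    have A: "x + 5*j \<in> PV K" using P[of "x+5*j"] that by simp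
    have "(x+5*j, x+5*j-1) \<in> EE K" by (simp only: arc) (use A B in blast)
    thus ?thesis by (simp only: q)
  qed
  have e1: "(5+5*j, 4+5*j) \<in> EE K" using e[of 5] by simp
  have e2: "(4+5*j, 3+5*j) \<in> EE K" using e[of 4] by simp
  have e3: "(3+5*j, 2+5*j) \<in> EE K" using e[of 3] by simp
  have e4: "(2+5*j, 1+5*j) \<in> EE K" using e[of 2] by simp
  have h1: "(5+5*j, 4+5*j) \<in> EE K ^^ Suc 0" using e1 by simp
  have h2: "(5+5*j, 3+5*j) \<in> EE K ^^ Suc (Suc 0)" by (rule relpow_Suc_I[OF h1 e2])
  have h3: "(5+5*j, 2+5*j) \<in> EE K ^^ Suc (Suc (Suc 0))" by (rule relpow_Suc_I[OF h2 e3])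
  have eq: "Suc (Suc (Suc (Suc 0))) = (4::nat)" by simp
  show ?thesis unfolding eq[symmetric] by (rule relpow_Suc_I[OF h3 e4])
qed

lemma gd_a: "j < K \<Longrightarrow> gdist (EE K) (5+5*j) (1+5*j) = 4"
proof -
  assume j: "j < K"
  have p: "(5+5*j, 1+5*j) \<in> EE K ^^ 4" by (rule chain4[OF j])
  hence r: "reach (EE K) (5+5*j) (1+5*j)" by (auto simp: reach_def dest: relpow_imp_rtrancl)
  have l: "lvl K (5+5*j) = 0" "lvl K (1+5*j) = 4" using a0P[OF j] a4P[OF j] by (auto simp: lvl_def)
  have "4 \<le> gdist (EE K) (5+5*j) (1+5*j)"
    by (rule gdist_ge[OF r]) (use pow_lvl l in fastforce)
  moreover have "gdist (EE K) (5+5*j) (1+5*j) \<le> 4" using p by (rule gdist_le)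
  ultimately show ?thesis by simp
qed

lemma reach_a: "j < K \<Longrightarrow> reach (EE K) (5+5*j) (1+5*j)"
  using chain4 by (auto simp: reach_def dest: relpow_imp_rtrancl)

lemma first_arc: "u \<notin> PV K \<Longrightarrow> u \<noteq> 0 \<Longrightarrow> (u,z) \<in> EE K \<Longrightarrow> u \<in> UV K \<and> z = 0"
  unfolding arc by auto

lemma gd_le2: assumes "reach (EE K) s t" "s \<notin> PV K" shows "gdist (EE K) s t \<le> 2"
proof (cases "t = s")
  case True thus ?thesis by (simp add: gdist_refl)
next
  case False
  have st: "(s,t) \<in> (EE K)\<^sup>*" using assms(1) by (simp add: reach_def)
  then obtain z where z: "(s,z) \<in> EE K" using False by (metis converse_rtranclE)
  have t: "t = 0 \<or> t \<in> PV K" using reach_any[OF st] False by auto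
  show ?thesis
  proof (cases "s = 0")
    case True
    hence "t \<in> PV K" using t False by auto
    thus ?thesis using gd_0P True by simp
  next
    case s0: False
    hence sU: "s \<in> UV K" using first_arc[OF assms(2) s0 z] by simp
    show ?thesis using t gd_U0[OF sU] gd_UP[OF sU] by auto
  qed
qed

lemma pw_le: "gdist E s t \<le> 2 \<Longrightarrow> card V \<ge> 1 \<Longrightarrow> pweight V E s t \<le> card V ^ 2"
proof -
  assume g: "gdist E s t \<le> 2" and c: "card V \<ge> 1"
  consider "gdist E s t = 0" | "gdist E s t = 1" | "gdist E s t = 2" using g by linarith
  thus ?thesis
  proof cases
    case 1 thus ?thesis by (simp add: pweight_def)
  next
    case 2 thus ?thesis using c by (simp add: pweight_def)
  next
    case 3 thus ?thesis using c by (simp add: pweight_def)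
  qed
qed

lemma pw_4: "gdist E s t = 4 \<Longrightarrow> pweight V E s t = card V ^ 4"
proof -
  assume "gdist E s t = 4"
  moreover have "log 2 (4::real) = 2"
  proof -
    have "(4::real) = 2 ^ 2" by simp
    thus ?thesis using log_pow_cancel[of "2::real" 2] by simp
  qed
  ultimately show ?thesis by (simp add: pweight_def)
qed

lemma on_sp_U: assumes u: "u \<in> UV K" and y: "y \<in> PV K" and o: "on_sp (EE K) u v y"
  shows "v = u \<or> v = 0 \<or> v = y"
proof (rule ccontr)
  assume n: "\<not> ?thesis"
  have ruv: "reach (EE K) u v" and rvy: "reach (EE K) v y"
    and s: "gdist (EE K) u v + gdist (EE K) v y = gdist (EE K) u y" using o by (auto simp: on_sp_def)
  have vP: "v \<in> PV K" using reach_any[of u v] ruv n by (auto simp: reach_def)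
  have "2 \<le> gdist (EE K) u v" by (rule gdist_ge[OF ruv]) (use U_pow_ge2[OF u _ vP] in blast)
  moreover have "gdist (EE K) v y \<noteq> 0" using gdist0[OF rvy] n by auto
  ultimately show False using s gd_UP[OF u y] by linarith
qed

lemma PV_sub: "PV K \<subseteq> VV K" by (auto simp: PV_def VV_def)
lemma UV_sub: "UV K \<subseteq> VV K" by (auto simp: UV_def VV_def)
lemma card_VV: "card (VV K) = 5*K + K*K + 1" by (simp add: VV_def)
lemma card_UV: "card (UV K) = K*K" by (simp add: UV_def)
lemma card_PV: "card (PV K) = 5*K" by (simp add: PV_def)
lemma fin_VV: "finite (VV K)" by (simp add: VV_def)
lemma zero_V: "0 \<in> VV K" by (simp add: VV_def)

lemma cw_small: assumes x: "x \<in> VV K" "x \<notin> PV K"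
  shows "center_weight (VV K) (EE K) Lf Lb x < card (VV K) ^ 4"
proof -
  let ?V = "VV K" and ?E = "EE K" and ?n = "card (VV K)"
  let ?A = "center_arcs ?V ?E Lf Lb x"
  have n1: "?n \<ge> 1" using card_VV by simp
  have sub: "?A \<subseteq> (?V - PV K) \<times> ?V"
  proof
    fix p assume p: "p \<in> ?A"
    obtain s t where st: "p = (s,t)" by force
    have "s \<in> ?V" "t \<in> ?V" "on_sp ?E s x t" using p st
      by (auto simp: center_arcs_def uncovered_def)
    moreover have "s \<notin> PV K"
      using reachP[of s x] calculation(3) x(2) by (auto simp: on_sp_def reach_def)
    ultimately show "p \<in> (?V - PV K) \<times> ?V" using st by auto
  qed
  have fin: "finite ?A" using sub fin_VV by (meson finite_Diff finite_SigmaI finite_subset)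
  have "center_weight ?V ?E Lf Lb x \<le> (\<Sum>p\<in>?A. ?n^2)"
    unfolding center_weight_def
  proof (rule sum_mono)
    fix p assume p: "p \<in> ?A"
    obtain s t where st: "p = (s,t)" by force
    have "reach ?E s t" "s \<notin> PV K" using p st sub by (auto simp: center_arcs_def uncovered_def)
    hence "gdist ?E s t \<le> 2" by (rule gd_le2)
    thus "(case p of (u, w) \<Rightarrow> pweight ?V ?E u w) \<le> ?n^2" using st pw_le n1 by simp
  qed
  also have "\<dots> = card ?A * ?n^2" by simp
  also have "\<dots> \<le> card ((?V - PV K) \<times> ?V) * ?n^2"
    using sub fin_VV by (intro mult_right_mono card_mono) auto
  also have "card ((?V - PV K) \<times> ?V) = (?n - 5*K) * ?n"
    using card_PV PV_sub fin_VV by (simp add: card_cartesian_product card_Diff_subset finite_subset)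
  also have "(?n - 5*K) * ?n * ?n^2 < ?n^4"
  proof -
    have a: "?n - 5*K < ?n" using card_VV K1 by simp
    have "(?n - 5*K) * ?n * ?n^2 = (?n - 5*K) * ?n^3" by (simp add: power_def)
    also have "\<dots> < ?n * ?n^3" using a n1 by (intro mult_strict_right_mono) auto
    also have "\<dots> = ?n^4" by (simp add: power_def)
    finally show ?thesis .
  qed
  finally show ?thesis .
qed

definition pathset :: "nat \<Rightarrow> nat set" where "pathset j = {y \<in> PV K. pth y = j}"

lemma unc_a: assumes j: "j < K" and S: "\<And>x. Lf x \<subseteq> S \<and> Lb x \<subseteq> S" and d: "S \<inter> pathset j = {}"
  shows "(5+5*j, 1+5*j) \<in> uncovered (VV K) (EE K) Lf Lb"
proof -
  have "\<not> covers (EE K) Lf Lb (5+5*j) (1+5*j)"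
  proof
    assume "covers (EE K) Lf Lb (5+5*j) (1+5*j)"
    then obtain v where v: "v \<in> Lf (5+5*j)" "on_sp (EE K) (5+5*j) v (1+5*j)" by (auto simp: covers_def)
    hence "v \<in> pathset j" using reachP[of "5+5*j" v] a0P[OF j]
      by (auto simp: on_sp_def reach_def pathset_def)
    thus False using v(1) S d by blast
  qed
  thus ?thesis using reach_a[OF j] a0P[OF j] a4P[OF j] PV_sub by (auto simp: uncovered_def)
qed

lemma cw_big: assumes j: "j < K" and u: "(5+5*j, 1+5*j) \<in> uncovered (VV K) (EE K) Lf Lb"
  shows "card (VV K) ^ 4 \<le> center_weight (VV K) (EE K) Lf Lb (5+5*j)"
proof -
  let ?A = "center_arcs (VV K) (EE K) Lf Lb (5+5*j)"
  have m: "(5+5*j, 1+5*j) \<in> ?A" using u on_sp_left[OF reach_a[OF j]] by (simp add: center_arcs_def)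
  have "?A \<subseteq> VV K \<times> VV K" by (auto simp: center_arcs_def uncovered_def)
  hence fin: "finite ?A" using fin_VV by (meson finite_SigmaI finite_subset)
  have "pweight (VV K) (EE K) (5+5*j) (1+5*j) = card (VV K) ^ 4" using gd_a[OF j] by (rule pw_4)
  moreover have "(\<lambda>(a,b). pweight (VV K) (EE K) a b) (5+5*j, 1+5*j) \<le> (\<Sum>p\<in>?A. (\<lambda>(a,b). pweight (VV K) (EE K) a b) p)"
    by (rule member_le_sum[OF m _ fin]) simp
  ultimately show ?thesis by (simp add: center_weight_def)
qed

lemma greedy_lb: assumes run: "dHHL_run (VV K) (EE K) vs"
  shows "K*K*K \<le> hl_size (VV K) (fst (labels_after (VV K) (EE K) vs)) (snd (labels_after (VV K) (EE K) vs))"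
proof -
  let ?V = "VV K" and ?E = "EE K"
  let ?L = "\<lambda>i. labels_after ?V ?E (take i vs)"
  have sv: "set vs \<subseteq> ?V" and dist: "distinct vs" using run by (auto simp: dHHL_run_def)
  have step: "\<And>x. x \<in> ?V - set (take i vs) \<Longrightarrow>
        center_weight ?V ?E (fst (?L i)) (snd (?L i)) x \<le> center_weight ?V ?E (fst (?L i)) (snd (?L i)) (vs ! i)"
    if "i < length vs" for i
    using run that unfolding dHHL_run_def Let_def by blast
  have final: "uncovered ?V ?E (fst (labels_after ?V ?E vs)) (snd (labels_after ?V ?E vs)) = {}"
    using run unfolding dHHL_run_def Let_def by blast
  have A: "set (take i vs) \<inter> pathset j = {} \<longrightarrow> set (take i vs) \<subseteq> PV K"
    if "i \<le> length vs" "j < K" for i j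
    using that(1)
  proof (induction i)
    case 0 thus ?case by simp
  next
    case (Suc i)
    hence i: "i < length vs" by simp
    have tk: "take (Suc i) vs = take i vs @ [vs ! i]" using i by (simp add: take_Suc_conv_app_nth)
    show ?case
    proof
      assume d: "set (take (Suc i) vs) \<inter> pathset j = {}"
      hence d': "set (take i vs) \<inter> pathset j = {}" unfolding tk by auto
      hence sub: "set (take i vs) \<subseteq> PV K" using Suc i by simp
      have a0: "5+5*j \<in> pathset j" using a0P[OF that(2)] by (simp add: pathset_def)
      hence a0V: "5+5*j \<in> ?V - set (take i vs)" using d' PV_sub by (auto simp: pathset_def)
      have unc: "(5+5*j, 1+5*j) \<in> uncovered ?V ?E (fst (?L i)) (snd (?L i))"
        by (rule unc_a[OF that(2) _ d']) (rule la_sub)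
      have "card ?V ^ 4 \<le> center_weight ?V ?E (fst (?L i)) (snd (?L i)) (vs ! i)"
        using cw_big[OF that(2) unc] step[OF i a0V] by linarith
      moreover have "vs ! i \<in> ?V" using sv i by auto
      ultimately have "vs ! i \<in> PV K" using cw_small[of "vs ! i"] by (meson not_le)
      thus "set (take (Suc i) vs) \<subseteq> PV K" using sub unfolding tk by auto
    qed
  qed
  define f where "f j = (LEAST i. i < length vs \<and> vs ! i \<in> pathset j)" for j
  have B: "\<exists>i. i < length vs \<and> vs ! i \<in> pathset j" if j: "j < K" for j
  proof -
    let ?F = "labels_after ?V ?E vs"
    have "(5+5*j, 1+5*j) \<notin> uncovered ?V ?E (fst ?F) (snd ?F)" using final by simp
    hence "covers ?E (fst ?F) (snd ?F) (5+5*j) (1+5*j)"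
      using reach_a[OF j] a0P[OF j] a4P[OF j] PV_sub by (auto simp: uncovered_def)
    then obtain v where v: "v \<in> fst ?F (5+5*j)" "on_sp ?E (5+5*j) v (1+5*j)" by (auto simp: covers_def)
    hence "v \<in> pathset j" using reachP[of "5+5*j" v] a0P[OF j]
      by (auto simp: on_sp_def reach_def pathset_def)
    moreover have "v \<in> set vs" using v(1) la_sub[of ?V ?E vs "5+5*j"] by blast
    ultimately show ?thesis by (metis in_set_conv_nth)
  qed
  have fj: "f j < length vs \<and> vs ! f j \<in> pathset j" if "j < K" for j
    unfolding f_def using B[OF that] by (rule LeastI_ex)
  have fmin: "set (take (f j) vs) \<inter> pathset j = {}" if "j < K" for j
  proof (rule ccontr)
    assume "set (take (f j) vs) \<inter> pathset j \<noteq> {}"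
    then obtain y where y: "y \<in> set (take (f j) vs)" "y \<in> pathset j" by auto
    then obtain i where i: "i < length (take (f j) vs)" "take (f j) vs ! i = y" by (metis in_set_conv_nth)
    hence "i < f j" "i < length vs" "vs ! i \<in> pathset j" using y by auto
    moreover have "f j \<le> i" unfolding f_def by (rule Least_le) (use calculation in blast)
    ultimately show False by simp
  qed
  have inLf: "vs ! f j \<in> fst (labels_after ?V ?E vs) u" if j: "j < K" and u: "u \<in> UV K" for j u
  proof -
    let ?i = "f j" and ?y = "vs ! f j"
    have i: "?i < length vs" and yp: "?y \<in> pathset j" using fj[OF j] by auto
    have d: "set (take ?i vs) \<inter> pathset j = {}" by (rule fmin[OF j])
    have sub: "set (take ?i vs) \<subseteq> PV K" using A[of ?i j] i j d by simp
    have yP: "?y \<in> PV K" using yp by (simp add: pathset_def)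
    have nc: "\<not> covers ?E (fst (?L ?i)) (snd (?L ?i)) u ?y"
    proof
      assume "covers ?E (fst (?L ?i)) (snd (?L ?i)) u ?y"
      then obtain v where v: "v \<in> fst (?L ?i) u" "on_sp ?E u v ?y" by (auto simp: covers_def)
      have vs: "v \<in> set (take ?i vs)" using v(1) la_sub[of ?V ?E "take ?i vs" u] by blast
      have "v = u \<or> v = 0 \<or> v = ?y" by (rule on_sp_U[OF u yP v(2)])
      thus False using vs sub U_notP[OF u] zero_notP d yp by auto
    qed
    have r: "reach ?E u ?y" using U_reach_P[OF u yP] by (auto simp: reach_def dest: relpow_imp_rtrancl)
    have "(u, ?y) \<in> center_arcs ?V ?E (fst (?L ?i)) (snd (?L ?i)) ?y"
      using nc r on_sp_right[OF r] u yP UV_sub PV_sub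
      by (auto simp: center_arcs_def uncovered_def)
    hence "?y \<in> fst (dstep ?V ?E ?y (?L ?i)) u" by (rule dstep_add)
    hence "?y \<in> fst (labels_after ?V ?E (take (Suc ?i) vs)) u"
      using i by (simp add: take_Suc_conv_app_nth la_snoc)
    moreover have "vs = take (Suc ?i) vs @ drop (Suc ?i) vs" by simp
    ultimately show ?thesis using la_mono[of ?V ?E "take (Suc ?i) vs" u "drop (Suc ?i) vs"] by auto
  qed
  let ?F = "labels_after ?V ?E vs"
  have cardLf: "K \<le> card (fst ?F u)" if u: "u \<in> UV K" for u
  proof -
    have inj: "inj_on (\<lambda>j. vs ! f j) {..<K}"
    proof (rule inj_onI)
      fix a b assume "a \<in> {..<K}" "b \<in> {..<K}" "vs ! f a = vs ! f b"
      thus "a = b" using fj[of a] fj[of b] by (auto simp: pathset_def)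
    qed
    have "(\<lambda>j. vs ! f j) ` {..<K} \<subseteq> fst ?F u" using inLf u by auto
    moreover have "finite (fst ?F u)" using la_sub[of ?V ?E vs u] by (meson finite_set finite_subset)
    ultimately have "card ((\<lambda>j. vs ! f j) ` {..<K}) \<le> card (fst ?F u)" by (rule card_mono[rotated])
    thus ?thesis using card_image[OF inj] by simp
  qed
  have "K*K*K = (\<Sum>u\<in>UV K. K)" using card_UV by simp
  also have "\<dots> \<le> (\<Sum>u\<in>UV K. card (fst ?F u))" using cardLf by (rule sum_mono)
  also have "\<dots> \<le> (\<Sum>u\<in>UV K. card (fst ?F u) + card (snd ?F u))" by (rule sum_mono) simp
  also have "\<dots> \<le> (\<Sum>u\<in>?V. card (fst ?F u) + card (snd ?F u))"
    by (rule sum_mono2[OF fin_VV UV_sub]) simp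
  finally show ?thesis by (simp add: hl_size_def)
qed

lemma reachP_le: "(a,b) \<in> (EE K)\<^sup>* \<Longrightarrow> a \<in> PV K \<Longrightarrow> b \<le> a"
proof (induction rule: rtrancl_induct)
  case base thus ?case by simp
next
  case (step y z)
  have "y \<in> PV K" using reachP step by blast
  hence "z = y - 1" using step(2) U_notP zero_notP unfolding arc by auto
  thus ?case using step by simp
qed

definition optLf :: "nat \<Rightarrow> nat set" where
  "optLf x = (if x \<in> UV K then {x, 0} else if x \<in> PV K then {5 * pth x + 1 .. x} else {x})"
definition optLb :: "nat \<Rightarrow> nat set" where
  "optLb x = (if x \<in> PV K then {x, 0} else {x})"

lemma V_cases: "x \<in> VV K \<Longrightarrow> x = 0 \<or> x \<in> PV K \<or> x \<in> UV K"
  by (auto simp: VV_def PV_def UV_def)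

lemma opt_HHL: "is_HHL (VV K) (EE K) optLf optLb"
proof -
  have lab_le: "\<forall>u \<in> optLf v \<union> optLb v. u \<le> v" for v
    by (auto simp: optLf_def optLb_def)
  have hier: "is_hierarchical (VV K) optLf optLb"
    unfolding is_hierarchical_def
  proof (intro exI conjI)
    show "bij_betw Suc (VV K) {1..card (VV K)}"
      by (simp add: VV_def bij_betw_def image_Suc_atLeastAtMost)
    show "\<forall>v\<in>VV K. \<forall>u\<in>optLf v \<union> optLb v. Suc u \<le> Suc v" using lab_le by auto
  qed
  have sub: "\<forall>v\<in>VV K. optLf v \<subseteq> VV K \<and> optLb v \<subseteq> VV K"
    using lab_le unfolding VV_def by (meson UnI1 UnI2 atLeastAtMost_iff le0 order_trans subsetI)
  have cov: "covers (EE K) optLf optLb u w" if u: "u \<in> VV K" and w: "w \<in> VV K" and r: "reach (EE K) u w" for u w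
  proof -
    have rr: "(u,w) \<in> (EE K)\<^sup>*" using r by (simp add: reach_def)
    consider "u = 0" | "u \<in> PV K" | "u \<in> UV K" using V_cases[OF u] by blast
    thus ?thesis
    proof cases
      case 1
      have "0 \<in> optLf u \<inter> optLb w" using 1 zero_notP U_notP reach_any[OF rr]
        by (auto simp: optLf_def optLb_def)
      thus ?thesis using on_sp_left[OF r] 1 by (auto simp: covers_def)
    next
      case 2
      have wP: "w \<in> PV K" "pth w = pth u" using reachP[OF rr 2] by auto
      have "w \<le> u" using reachP_le[OF rr 2] .
      moreover have "5 * pth w + 1 \<le> w" using wP(1) by (auto simp: pth_def PV_def)
      ultimately have "w \<in> optLf u \<inter> optLb w" using 2 wP U_notP
        by (auto simp: optLf_def optLb_def)
      thus ?thesis using on_sp_right[OF r] by (auto simp: covers_def)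
    next
      case 3
      have cs: "w = u \<or> w = 0 \<or> w \<in> PV K" using reach_any[OF rr] .
      show ?thesis
      proof (cases "w = u")
        case True
        hence "u \<in> optLf u \<inter> optLb w" using 3 U_notP by (auto simp: optLf_def optLb_def)
        thus ?thesis using on_sp_left[OF r] True by (auto simp: covers_def)
      next
        case False
        have h: "0 \<in> optLf u \<inter> optLb w" using 3 False cs zero_notP
          by (auto simp: optLf_def optLb_def)
        have "on_sp (EE K) u 0 w"
        proof (cases "w = 0")
          case True thus ?thesis using on_sp_right[OF r] by simp
        next
          case w0: False
          hence wP: "w \<in> PV K" using cs False by auto
          have "(u,0) \<in> EE K" "(0,w) \<in> EE K" using 3 wP by (auto simp: arc)
          thus ?thesis using gd_U0[OF 3] gd_0P[OF wP] gd_UP[OF 3 wP]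
            by (auto simp: on_sp_def reach_def)
        qed
        thus ?thesis using h by (auto simp: covers_def)
      qed
    qed
  qed
  show ?thesis unfolding is_HHL_def is_hub_labeling_def using hier sub cov by blast
qed

lemma opt_size: "hl_size (VV K) optLf optLb \<le> 7 * card (VV K)"
proof -
  have c: "card (optLf v) + card (optLb v) \<le> 7" for v
  proof -
    have "card (optLb v) \<le> 2" by (auto simp: optLb_def card_insert_le_m1)
    moreover have "card (optLf v) \<le> 5"
    proof (cases "v \<in> UV K")
      case True thus ?thesis by (simp add: optLf_def card_insert_if)
    next
      case False
      show ?thesis
      proof (cases "v \<in> PV K")
        case True
        hence v1: "v \<ge> 1" by (simp add: PV_def)
        have "v - 1 = 5 * ((v-1) div 5) + (v-1) mod 5" by simp
        moreover have "(v-1) mod 5 < 5" by simp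
        ultimately have "v + 1 - (5 * pth v + 1) \<le> 5" unfolding pth_def using v1 by linarith
        thus ?thesis using True False by (simp add: optLf_def)
      next
        case False2: False thus ?thesis using False by (simp add: optLf_def)
      qed
    qed
    ultimately show ?thesis by linarith
  qed
  have "hl_size (VV K) optLf optLb \<le> (\<Sum>v\<in>VV K. 7)" unfolding hl_size_def by (rule sum_mono) (rule c)
  thus ?thesis by simp
qed

lemma EE_sub: "EE K \<subseteq> VV K \<times> VV K"
proof
  fix p assume p: "p \<in> EE K"
  obtain a b where ab: "p = (a,b)" by force
  have e: "(a,b) \<in> EE K" using p ab by simp
  have "a \<in> VV K" using e UV_sub PV_sub zero_V unfolding arc by auto
  moreover have "b \<in> VV K" using arc_tgt[OF e] PV_sub zero_V by auto
  ultimately show "p \<in> VV K \<times> VV K" using ab by simp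
qed

end


lemma powr_bound: fixes K :: nat assumes K: "K \<ge> 1"
  shows "real (5*K + K*K + 1) powr (3/2) \<le> 21 * real (K*K*K)"
proof -
  let ?n = "real (5*K + K*K + 1)"
  have Kr: "real K \<ge> 1" using K by simp
  have kk: "K \<le> K*K" using K by simp
  have "5*K + K*K + 1 \<le> 7*(K*K)" using kk K by linarith
  hence n7: "?n \<le> 7 * real K ^ 2" by (simp add: power2_eq_square flip: of_nat_mult of_nat_le_iff)
  have n9: "?n \<le> (3 * real K)^2" using n7 by (simp add: power2_eq_square)
  have sq: "sqrt ((3 * real K)^2) = 3 * real K" using Kr by (simp only: real_sqrt_abs)
  have s: "sqrt ?n \<le> 3 * real K" using real_sqrt_le_mono[OF n9] unfolding sq .
  have "?n powr (3/2) = ?n powr (1 + 1/2)" by simp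
  also have "\<dots> = ?n * sqrt ?n"
  proof -
    have p: "?n > 0" by (simp only: of_nat_0_less_iff)
    have "?n powr (1 + 1/2) = ?n powr 1 * ?n powr (1/2)" by (rule powr_add)
    thus ?thesis using p by (simp add: powr_half_sqrt)
  qed
  also have "\<dots> \<le> (7 * real K ^ 2) * (3 * real K)"
    by (rule mult_mono[OF n7 s]) auto
  also have "\<dots> = 21 * real (K*K*K)" by (simp add: power2_eq_square)
  finally show ?thesis .
qed

theorem mainTheorem8:
  shows "\<exists>(G :: nat \<Rightarrow> nat set \<times> (nat \<times> nat) set).
    (\<forall>k. finite (fst (G k)) \<and> fst (G k) \<noteq> {} \<and> snd (G k) \<subseteq> fst (G k) \<times> fst (G k)) \<and>
    strict_mono (\<lambda>k. card (fst (G k))) \<and>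
    (\<exists>c > 0. \<forall>\<^sub>F k in sequentially. \<forall>vs.
        dHHL_run (fst (G k)) (snd (G k)) vs \<longrightarrow>
        real (hl_size (fst (G k)) (fst (labels_after (fst (G k)) (snd (G k)) vs))
                                  (snd (labels_after (fst (G k)) (snd (G k)) vs)))
          \<ge> c * real (card (fst (G k))) powr (3/2)) \<and>
    (\<exists>C. \<forall>\<^sub>F k in sequentially. \<exists>Lf Lb.
        is_HHL (fst (G k)) (snd (G k)) Lf Lb \<and>
        real (hl_size (fst (G k)) Lf Lb) \<le> C * real (card (fst (G k))))"
proof (intro exI[of _ "\<lambda>k. (VV (Suc k), EE (Suc k))"] conjI allI)
  fix k
  show "finite (fst (VV (Suc k), EE (Suc k)))" by (simp add: VV_def)
  show "fst (VV (Suc k), EE (Suc k)) \<noteq> {}" by (simp add: VV_def)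
  show "snd (VV (Suc k), EE (Suc k)) \<subseteq> fst (VV (Suc k), EE (Suc k)) \<times> fst (VV (Suc k), EE (Suc k))"
    using EE_sub[of "Suc k"] by simp
next
  show "strict_mono (\<lambda>k. card (fst (VV (Suc k), EE (Suc k))))"
    unfolding strict_mono_Suc_iff by (simp add: VV_def)
next
  show "\<exists>c > 0. \<forall>\<^sub>F k in sequentially. \<forall>vs.
        dHHL_run (fst (VV (Suc k), EE (Suc k))) (snd (VV (Suc k), EE (Suc k))) vs \<longrightarrow>
        real (hl_size (fst (VV (Suc k), EE (Suc k))) (fst (labels_after (fst (VV (Suc k), EE (Suc k))) (snd (VV (Suc k), EE (Suc k))) vs))
                                  (snd (labels_after (fst (VV (Suc k), EE (Suc k))) (snd (VV (Suc k), EE (Suc k))) vs)))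
          \<ge> c * real (card (fst (VV (Suc k), EE (Suc k)))) powr (3/2)"
  proof (intro exI[of _ "1/21"] conjI always_eventually allI impI)
    fix k vs
    assume run: "dHHL_run (fst (VV (Suc k), EE (Suc k))) (snd (VV (Suc k), EE (Suc k))) vs"
    let ?K = "Suc k"
    have g: "?K*?K*?K \<le> hl_size (VV ?K) (fst (labels_after (VV ?K) (EE ?K) vs)) (snd (labels_after (VV ?K) (EE ?K) vs))"
      using greedy_lb[of ?K vs] run by simp
    have "(1/21) * real (card (VV ?K)) powr (3/2) \<le> real (?K*?K*?K)"
      using powr_bound[of ?K] card_VV[of ?K] by simp
    also have "\<dots> \<le> real (hl_size (VV ?K) (fst (labels_after (VV ?K) (EE ?K) vs)) (snd (labels_after (VV ?K) (EE ?K) vs)))"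
      using g by linarith
    finally show "(1/21) * real (card (fst (VV (Suc k), EE (Suc k)))) powr (3/2) \<le>
        real (hl_size (fst (VV (Suc k), EE (Suc k))) (fst (labels_after (fst (VV (Suc k), EE (Suc k))) (snd (VV (Suc k), EE (Suc k))) vs))
                                  (snd (labels_after (fst (VV (Suc k), EE (Suc k))) (snd (VV (Suc k), EE (Suc k))) vs)))" by simp
  qed simp
next
  show "\<exists>C. \<forall>\<^sub>F k in sequentially. \<exists>Lf Lb.
        is_HHL (fst (VV (Suc k), EE (Suc k))) (snd (VV (Suc k), EE (Suc k))) Lf Lb \<and>
        real (hl_size (fst (VV (Suc k), EE (Suc k))) Lf Lb) \<le> C * real (card (fst (VV (Suc k), EE (Suc k))))"
  proof (intro exI[of _ 7] always_eventually allI)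
    fix k
    let ?K = "Suc k"
    have "is_HHL (VV ?K) (EE ?K) (optLf ?K) (optLb ?K)" by (rule opt_HHL) simp
    moreover have "real (hl_size (VV ?K) (optLf ?K) (optLb ?K)) \<le> 7 * real (card (VV ?K))"
      using opt_size[of ?K] by simp
    ultimately show "\<exists>Lf Lb. is_HHL (fst (VV (Suc k), EE (Suc k))) (snd (VV (Suc k), EE (Suc k))) Lf Lb \<and>
        real (hl_size (fst (VV (Suc k), EE (Suc k))) Lf Lb) \<le> 7 * real (card (fst (VV (Suc k), EE (Suc k))))"
      by auto
  qed
qed

end
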